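(* Let $n\ge1$, $t>0$, $\lambda\in\mathbb{R}\setminus\{0\}$. For all $\mathbf a,\mathbf b\in\mathbb{R}^n$, $$\int_{\mathbb{C}^n}\int_{\mathbb{C}^n} p_{2t}^\lambda(\mathbf z+\mathbf a,\mathbf w+\mathbf b)\,e^{\frac{i\lambda}{2}(\mathbf a\cdot\mathbf w-\mathbf b\cdot\mathbf z)}\,\overline{p_{2t}^\lambda(\mathbf z,\mathbf w)}\,W_t^\lambda(\mathbf z,\mathbf w)\,d\mathbf z\,d\mathbf w=p_{2t}^\lambda(\mathbf a,\mathbf b).$$
   Context: For $\mathbf a,\mathbf b\in\mathbb{C}^n$ write $\mathbf a\cdot\mathbf b=\sum_j a_jb_j$ (complex bilinear). For $s>0$, $\lambda\in\mathbb{R}\setminus\{0\}$ and $(\mathbf z,\mathbf w)\in\mathbb{C}^n\times\mathbb{C}^n$ let $p_s^\lambda(\mathbf z,\mathbf w)=(4\pi)^{-n}\left(\frac{\lambda}{\sinh(s\lambda)}\right)^n\exp\!\big(-\tfrac{\lambda}{4}\coth(s\lambda)(\mathbf z\cdot\mathbf z+\mathbf w\cdot\mathbf w)\big)$. Define $W_t^\lambda(\mathbf x+i\mathbf y,\mathbf u+i\mathbf v)=4^n e^{\lambda(\mathbf u\cdot\mathbf y-\mathbf v\cdot\mathbf x)}\,p_{2t}^\lambda(2\mathbf y,2\mathbf v)$ for $\mathbf x,\mathbf y,\mathbf u,\mathbf v\in\mathbb{R}^n$. Integration is with respect to Lebesgue measure on $\mathbb{C}^n\times\mathbb{C}^n\cong\mathbb{R}^{4n}$.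 *)

theory Defs
  imports "HOL-Analysis.Analysis"
begin

text \<open>Complex bilinear (not Hermitian) dot product on C^n.\<close>
definition cdot :: "complex^'n \<Rightarrow> complex^'n \<Rightarrow> complex" where
  "cdot a b = (\<Sum>j\<in>UNIV. a$j * b$j)"

definition cvec :: "real^'n \<Rightarrow> complex^'n" where
  "cvec a = (\<chi> j. complex_of_real (a$j))"

definition re_vec :: "complex^'n \<Rightarrow> real^'n" where
  "re_vec z = (\<chi> j. Re (z$j))"

definition im_vec :: "complex^'n \<Rightarrow> real^'n" where
  "im_vec z = (\<chi> j. Im (z$j))"

definition coth :: "real \<Rightarrow> real" where
  "coth x = cosh x / sinh x"

definition pker :: "real \<Rightarrow> real \<Rightarrow> complex^'n \<Rightarrow> complex^'n \<Rightarrow> complex" where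
  "pker s lam z w =
     complex_of_real ((4*pi) powi (- int CARD('n)) * (lam / sinh (s*lam)) ^ CARD('n))
     * exp (- complex_of_real (lam/4 * coth (s*lam)) * (cdot z z + cdot w w))"

definition Wker :: "real \<Rightarrow> real \<Rightarrow> complex^'n \<Rightarrow> complex^'n \<Rightarrow> complex" where
  "Wker t lam z w =
     (let x = re_vec z; y = im_vec z; u = re_vec w; v = im_vec w in
      complex_of_real (4 ^ CARD('n) * exp (lam * (u \<bullet> y - v \<bullet> x)))
      * pker (2*t) lam (cvec (2 *\<^sub>R y)) (cvec (2 *\<^sub>R v)))"

end

theory Submission
  imports Defs "HOL-Probability.Characteristic_Functions"
begin


lemma std_char:
  fixes th :: real
  shows "has_bochner_integral lborel (\<lambda>x. complex_of_real (exp (- (x::real)\<^sup>2/2)) * iexp (th*x))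
            (complex_of_real (sqrt (2*pi) * exp (- (th\<^sup>2)/2)))"
proof -
  interpret real_distribution std_normal_distribution by (rule real_dist_normal_dist)
  have m: "(\<lambda>x. iexp (th*x)) \<in> borel_measurable lborel" by measurable
  have int1: "integrable std_normal_distribution (\<lambda>x. iexp (th*x))"
    by (rule integrable_iexp) auto
  have int2: "integrable lborel (\<lambda>x. std_normal_density x *\<^sub>R iexp (th*x))"
    using int1
    by (subst (asm) integrable_density) auto
  have eq: "integral\<^sup>L lborel (\<lambda>x. std_normal_density x *\<^sub>R iexp (th*x)) = complex_of_real (exp (- (th\<^sup>2)/2))"
    using fun_cong[OF char_std_normal_distribution, of th]
    unfolding char_def
    by (subst (asm) integral_density) auto
  have h: "has_bochner_integral lborel (\<lambda>x. std_normal_density x *\<^sub>R iexp (th*x)) (complex_of_real (exp (- (th\<^sup>2)/2)))"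
    using int2 eq by (simp add: has_bochner_integral_iff)
  have h2: "has_bochner_integral lborel (\<lambda>x. complex_of_real (sqrt (2*pi)) * (std_normal_density x *\<^sub>R iexp (th*x)))
      (complex_of_real (sqrt (2*pi)) * complex_of_real (exp (- (th\<^sup>2)/2)))"
    by (rule has_bochner_integral_mult_right[OF h])
  show ?thesis
    using h2 by (simp add: std_normal_density_def scaleR_conv_of_real mult_ac)
qed



lemma gauss1:
  fixes A :: real and be :: complex
  assumes A: "A > 0"
  shows "has_bochner_integral lborel (\<lambda>x::real. exp (be * of_real x - of_real A * of_real (x\<^sup>2)))
           (of_real (sqrt (pi/A)) * exp (be\<^sup>2 / of_real (4*A)))"
proof -
  define r where "r = Re be"
  define sI where "sI = Im be"
  define c where "c = 1 / sqrt (2*A)"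
  define t0 where "t0 = r / (2*A)"
  define K where "K = exp (complex_of_real (r\<^sup>2/(4*A)) + \<i> * complex_of_real (sI * t0))"
  have c0: "c > 0" using A by (simp add: c_def)
  have cc: "c\<^sup>2 = 1/(2*A)" using A by (simp add: c_def power_divide)
  have cc2: "c * c = 1/(2*A)" using cc by (simp add: power2_eq_square)
  have pt: "exp (be * of_real (t0 + c * y) - of_real A * of_real ((t0 + c * y)\<^sup>2))
      = K * (complex_of_real (exp (- y\<^sup>2/2)) * iexp ((sI*c)*y))" for y
  proof -
    have e: "be * of_real (t0 + c * y) - of_real A * of_real ((t0 + c * y)\<^sup>2)
        = (complex_of_real (r\<^sup>2/(4*A)) + \<i> * complex_of_real (sI * t0)) + (complex_of_real (- y\<^sup>2/2) + \<i> * complex_of_real ((sI*c)*y))"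
    proof (rule complex_eqI)
      have "r * (t0 + c * y) - A * (t0 + c * y)\<^sup>2 = r\<^sup>2/(4*A) - y\<^sup>2/2"
      proof -
        have "r * (t0 + c * y) - A * (t0 + c * y)\<^sup>2 = r*t0 - A*t0\<^sup>2 + (r*c*y - 2*A*t0*c*y) - A * c\<^sup>2 * y\<^sup>2"
          by (simp add: power2_eq_square algebra_simps)
        also have "\<dots> = r\<^sup>2/(4*A) - y\<^sup>2/2"
          using A unfolding cc t0_def by (simp add: power2_eq_square field_simps)
        finally show ?thesis .
      qed
      then show "Re (be * of_real (t0 + c * y) - of_real A * of_real ((t0 + c * y)\<^sup>2)) = Re ((complex_of_real (r\<^sup>2/(4*A)) + \<i> * complex_of_real (sI * t0)) + (complex_of_real (- y\<^sup>2/2) + \<i> * complex_of_real ((sI*c)*y)))"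
        by (simp add: r_def)
      show "Im (be * of_real (t0 + c * y) - of_real A * of_real ((t0 + c * y)\<^sup>2)) = Im ((complex_of_real (r\<^sup>2/(4*A)) + \<i> * complex_of_real (sI * t0)) + (complex_of_real (- y\<^sup>2/2) + \<i> * complex_of_real ((sI*c)*y)))"
        by (simp add: sI_def algebra_simps)
    qed
    have x: "complex_of_real (exp (- y\<^sup>2/2)) = exp (complex_of_real (- y\<^sup>2/2))"
      by (simp only: exp_of_real)
    show ?thesis unfolding e K_def exp_add x by (simp add: mult_ac)
  qed
  have h1: "has_bochner_integral lborel (\<lambda>y. K * (complex_of_real (exp (- y\<^sup>2/2)) * iexp ((sI*c)*y)))
        (K * complex_of_real (sqrt (2*pi) * exp (- ((sI*c)\<^sup>2)/2)))"
    by (rule has_bochner_integral_mult_right[OF std_char])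
  have val: "K * complex_of_real (sqrt (2*pi) * exp (- ((sI*c)\<^sup>2)/2))
     = (of_real (sqrt (pi/A)) * exp (be\<^sup>2 / of_real (4*A))) /\<^sub>R \<bar>c\<bar>"
  proof -
    have b2: "be\<^sup>2 / of_real (4*A) = (complex_of_real (r\<^sup>2/(4*A)) + \<i> * complex_of_real (sI * t0)) + complex_of_real (- ((sI*c)\<^sup>2)/2)"
    proof (rule complex_eqI)
      have "be = Complex r sI" by (simp add: r_def sI_def)
      then have "be\<^sup>2 = Complex (r\<^sup>2 - sI\<^sup>2) (2*r* sI)" by (simp add: power2_eq_square complex_eq_iff)
      then show "Re (be\<^sup>2 / of_real (4*A)) = Re ((complex_of_real (r\<^sup>2/(4*A)) + \<i> * complex_of_real (sI * t0)) + complex_of_real (- ((sI*c)\<^sup>2)/2))"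
        "Im (be\<^sup>2 / of_real (4*A)) = Im ((complex_of_real (r\<^sup>2/(4*A)) + \<i> * complex_of_real (sI * t0)) + complex_of_real (- ((sI*c)\<^sup>2)/2))"
        using A cc2 by (simp_all add: power_mult_distrib cc t0_def field_simps power2_eq_square)
    qed
    have sq: "sqrt (pi/A) = c * sqrt (2*pi)"
      using A by (simp add: c_def real_sqrt_divide real_sqrt_mult field_simps)
    have e2: "complex_of_real (exp (- ((sI*c)\<^sup>2)/2)) = exp (complex_of_real (- ((sI*c)\<^sup>2)/2))"
      by (simp only: exp_of_real)
    have "K * complex_of_real (sqrt (2*pi) * exp (- ((sI*c)\<^sup>2)/2))
        = K * complex_of_real (sqrt (2*pi)) * exp (complex_of_real (- ((sI*c)\<^sup>2)/2))"
      unfolding of_real_mult e2 by (simp only: mult_ac)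
    also have "\<dots> = (of_real (c * sqrt (2*pi)) * (K * exp (complex_of_real (- ((sI*c)\<^sup>2)/2)))) /\<^sub>R \<bar>c\<bar>"
      using c0 by (simp add: scaleR_conv_of_real)
    also have "\<dots> = (of_real (sqrt (pi/A)) * exp (be\<^sup>2 / of_real (4*A))) /\<^sub>R \<bar>c\<bar>"
      unfolding b2 K_def exp_add sq ..
    finally show ?thesis .
  qed
  have h2: "has_bochner_integral lborel (\<lambda>y. exp (be * of_real (t0 + c * y) - of_real A * of_real ((t0 + c * y)\<^sup>2)))
        ((of_real (sqrt (pi/A)) * exp (be\<^sup>2 / of_real (4*A))) /\<^sub>R \<bar>c\<bar>)"
    using h1 unfolding pt val .
  show ?thesis
    using h2 lborel_has_bochner_integral_real_affine_iff[of c "\<lambda>x::real. exp (be * of_real x - of_real A * of_real (x\<^sup>2))" _ t0] c0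
    by simp
qed



lemma gauss_inner:
  fixes A c x :: real and b1 b2 :: complex
  assumes A: "A > 0"
  shows "has_bochner_integral lborel (\<lambda>y::real. exp (b1 * of_real x + b2 * of_real y - of_real A * of_real (x\<^sup>2)
            - of_real c * of_real x * of_real y - of_real A * of_real (y\<^sup>2)))
   (of_real (sqrt (pi/A)) * exp (b2\<^sup>2 / of_real (4*A))
      * exp ((b1 - of_real c * b2 / of_real (2*A)) * of_real x - of_real (A - c\<^sup>2/(4*A)) * of_real (x\<^sup>2)))"
proof -
  have h: "has_bochner_integral lborel (\<lambda>y::real. exp (b1 * of_real x - of_real A * of_real (x\<^sup>2)) *
      exp ((b2 - of_real c * of_real x) * of_real y - of_real A * of_real (y\<^sup>2)))
     (exp (b1 * of_real x - of_real A * of_real (x\<^sup>2)) * (of_real (sqrt (pi/A)) * exp ((b2 - of_real c * of_real x)\<^sup>2 / of_real (4*A))))"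
    by (rule has_bochner_integral_mult_right[OF gauss1[OF A]])
  have A0: "complex_of_real A \<noteq> 0" using A by simp
  have f: "exp (b1 * of_real x - of_real A * of_real (x\<^sup>2)) *
      exp ((b2 - of_real c * of_real x) * of_real y - of_real A * of_real (y\<^sup>2))
    = exp (b1 * of_real x + b2 * of_real y - of_real A * of_real (x\<^sup>2)
            - of_real c * of_real x * of_real y - of_real A * of_real (y\<^sup>2))" for y
    unfolding exp_add[symmetric] by (rule arg_cong[where f=exp]) (simp add: algebra_simps)
  have v: "exp (b1 * of_real x - of_real A * of_real (x\<^sup>2)) * (of_real (sqrt (pi/A)) * exp ((b2 - of_real c * of_real x)\<^sup>2 / of_real (4*A)))
     = of_real (sqrt (pi/A)) * exp (b2\<^sup>2 / of_real (4*A))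
      * exp ((b1 - of_real c * b2 / of_real (2*A)) * of_real x - of_real (A - c\<^sup>2/(4*A)) * of_real (x\<^sup>2))"
  proof -
    have "b1 * of_real x - of_real A * of_real (x\<^sup>2) + (b2 - of_real c * of_real x)\<^sup>2 / of_real (4*A)
      = b2\<^sup>2 / of_real (4*A) + ((b1 - of_real c * b2 / of_real (2*A)) * of_real x - of_real (A - c\<^sup>2/(4*A)) * of_real (x\<^sup>2))"
      using A0 by (simp add: field_simps power2_eq_square)
    then have "exp (b1 * of_real x - of_real A * of_real (x\<^sup>2)) * exp ((b2 - of_real c * of_real x)\<^sup>2 / of_real (4*A))
       = exp (b2\<^sup>2 / of_real (4*A)) * exp ((b1 - of_real c * b2 / of_real (2*A)) * of_real x - of_real (A - c\<^sup>2/(4*A)) * of_real (x\<^sup>2))"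
      unfolding exp_add[symmetric] by simp
    then show ?thesis by (simp add: mult_ac)
  qed
  show ?thesis using h unfolding f v .
qed


lemma gauss2:
  fixes A c :: real and b1 b2 :: complex
  assumes A: "A > 0" and cA: "c\<^sup>2 < 4*A\<^sup>2"
  shows "has_bochner_integral (lborel \<Otimes>\<^sub>M lborel) (\<lambda>(x::real, y::real). exp (b1 * of_real x + b2 * of_real y - of_real A * of_real (x\<^sup>2)
            - of_real c * of_real x * of_real y - of_real A * of_real (y\<^sup>2)))
     (of_real (pi / sqrt (A\<^sup>2 - c\<^sup>2/4)) * exp ((of_real A * (b1\<^sup>2 + b2\<^sup>2) - of_real c * b1 * b2) / of_real (4*A\<^sup>2 - c\<^sup>2)))"
proof -
  define F where "F = (\<lambda>(b1::complex) (b2::complex) (x::real) (y::real). exp (b1 * of_real x + b2 * of_real y - of_real A * of_real (x\<^sup>2)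
            - of_real c * of_real x * of_real y - of_real A * of_real (y\<^sup>2)))"
  define A' where "A' = A - c\<^sup>2/(4*A)"
  have A': "A' > 0" using A cA unfolding A'_def by (simp add: field_simps power2_eq_square)
  define G where "G = (\<lambda>(b1::complex) (b2::complex) (x::real). of_real (sqrt (pi/A)) * exp (b2\<^sup>2 / of_real (4*A))
      * exp ((b1 - of_real c * b2 / of_real (2*A)) * of_real x - of_real A' * of_real (x\<^sup>2)))"
  have inner: "has_bochner_integral lborel (F b1 b2 x) (G b1 b2 x)" for b1 b2 x
    unfolding F_def G_def A'_def by (rule gauss_inner[OF A])
  have Gint: "has_bochner_integral lborel (G b1 b2)
      (of_real (sqrt (pi/A)) * exp (b2\<^sup>2 / of_real (4*A)) *
        (of_real (sqrt (pi/A')) * exp ((b1 - of_real c * b2 / of_real (2*A))\<^sup>2 / of_real (4*A'))))" for b1 b2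
    unfolding G_def by (rule has_bochner_integral_mult_right[OF gauss1[OF A']])
  have meas: "(\<lambda>(x, y). F b1 b2 x y) \<in> borel_measurable (lborel \<Otimes>\<^sub>M lborel)"
    unfolding F_def by measurable
  have nrm: "norm (F b1 b2 x y) = Re (F (of_real (Re b1)) (of_real (Re b2)) x y)" for x y
  proof -
    have "F (of_real (Re b1)) (of_real (Re b2)) x y = of_real (exp (Re b1 * x + Re b2 * y - A * x\<^sup>2 - c * x * y - A * y\<^sup>2))"
      unfolding F_def exp_of_real[symmetric] by simp
    then show ?thesis unfolding F_def by simp
  qed
  have integ: "integrable (lborel \<Otimes>\<^sub>M lborel) (\<lambda>(x, y). F b1 b2 x y)"
  proof (rule lborel_pair.Fubini_integrable)
    show "(\<lambda>(x, y). F b1 b2 x y) \<in> borel_measurable (lborel \<Otimes>\<^sub>M lborel)" by (rule meas)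
    have "(\<lambda>x. \<integral>y. norm ((\<lambda>(x, y). F b1 b2 x y) (x, y)) \<partial>lborel) = (\<lambda>x. Re (G (of_real (Re b1)) (of_real (Re b2)) x))"
    proof
      fix x
      have "(\<integral>y. norm ((\<lambda>(x, y). F b1 b2 x y) (x, y)) \<partial>lborel) = (\<integral>y. Re (F (of_real (Re b1)) (of_real (Re b2)) x y) \<partial>lborel)"
        by (simp add: nrm)
      also have "\<dots> = Re (G (of_real (Re b1)) (of_real (Re b2)) x)"
        using has_bochner_integral_Re[OF inner] by (simp add: has_bochner_integral_iff)
      finally show "(\<integral>y. norm ((\<lambda>(x, y). F b1 b2 x y) (x, y)) \<partial>lborel) = Re (G (of_real (Re b1)) (of_real (Re b2)) x)" .
    qed
    moreover have "integrable lborel (\<lambda>x. Re (G (of_real (Re b1)) (of_real (Re b2)) x))"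
      using Gint by (intro integrable_Re) (auto simp: has_bochner_integral_iff)
    ultimately show "integrable lborel (\<lambda>x. \<integral>y. norm ((\<lambda>(x, y). F b1 b2 x y) (x, y)) \<partial>lborel)" by simp
    show "AE x in lborel. integrable lborel (\<lambda>y. (\<lambda>(x, y). F b1 b2 x y) (x, y))"
      using inner by (auto simp: has_bochner_integral_iff)
  qed
  have val: "integral\<^sup>L (lborel \<Otimes>\<^sub>M lborel) (\<lambda>(x, y). F b1 b2 x y) = 
      of_real (sqrt (pi/A)) * exp (b2\<^sup>2 / of_real (4*A)) *
        (of_real (sqrt (pi/A')) * exp ((b1 - of_real c * b2 / of_real (2*A))\<^sup>2 / of_real (4*A')))"
  proof -
    have "integral\<^sup>L (lborel \<Otimes>\<^sub>M lborel) (\<lambda>(x, y). F b1 b2 x y) = (\<integral>x. (\<integral>y. F b1 b2 x y \<partial>lborel) \<partial>lborel)"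
      using lborel_pair.integral_fst'[OF integ] by simp
    also have "\<dots> = (\<integral>x. G b1 b2 x \<partial>lborel)"
      using inner by (simp add: has_bochner_integral_iff)
    finally show ?thesis using Gint by (simp add: has_bochner_integral_iff)
  qed
  have alg: "of_real (sqrt (pi/A)) * exp (b2\<^sup>2 / of_real (4*A)) *
        (of_real (sqrt (pi/A')) * exp ((b1 - of_real c * b2 / of_real (2*A))\<^sup>2 / of_real (4*A')))
      = of_real (pi / sqrt (A\<^sup>2 - c\<^sup>2/4)) * exp ((of_real A * (b1\<^sup>2 + b2\<^sup>2) - of_real c * b1 * b2) / of_real (4*A\<^sup>2 - c\<^sup>2))"
  proof -
    have AA: "A * A' = A\<^sup>2 - c\<^sup>2/4" using A unfolding A'_def by (simp add: field_simps power2_eq_square)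
    have r: "sqrt (pi/A) * sqrt (pi/A') = pi / sqrt (A\<^sup>2 - c\<^sup>2/4)"
      using A A' unfolding AA[symmetric]
      by (simp add: real_sqrt_divide real_sqrt_mult field_simps)
    have d: "4*A\<^sup>2 - c\<^sup>2 \<noteq> 0" using cA by simp
    have d': "complex_of_real (4*A\<^sup>2 - c\<^sup>2) \<noteq> 0" using d of_real_eq_0_iff by blast
    have A'e: "complex_of_real (4*A') = of_real (4*A\<^sup>2 - c\<^sup>2) / of_real A"
      using A unfolding A'_def by (simp add: field_simps power2_eq_square)
    have e: "b2\<^sup>2 / of_real (4*A) + (b1 - of_real c * b2 / of_real (2*A))\<^sup>2 / of_real (4*A')
       = (of_real A * (b1\<^sup>2 + b2\<^sup>2) - of_real c * b1 * b2) / of_real (4*A\<^sup>2 - c\<^sup>2)"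
    proof -
      have A0: "complex_of_real A \<noteq> 0" using A by simp
      show ?thesis unfolding A'e using A0 d'
        by (simp add: field_simps power2_eq_square)
    qed
    have "of_real (sqrt (pi/A)) * exp (b2\<^sup>2 / of_real (4*A)) *
        (of_real (sqrt (pi/A')) * exp ((b1 - of_real c * b2 / of_real (2*A))\<^sup>2 / of_real (4*A')))
       = of_real (sqrt (pi/A) * sqrt (pi/A')) * exp (b2\<^sup>2 / of_real (4*A) + (b1 - of_real c * b2 / of_real (2*A))\<^sup>2 / of_real (4*A'))"
      unfolding exp_add of_real_mult by (simp only: mult_ac)
    then show ?thesis unfolding r e .
  qed
  show ?thesis
    using integ val alg unfolding F_def by (simp add: has_bochner_integral_iff)
qed



definition Psi :: "('n \<times> bool \<Rightarrow> real \<times> real) \<Rightarrow> (complex^'n) \<times> (complex^'n)" where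
  "Psi f = ((\<chi> j. Complex (fst (f (j,True))) (snd (f (j,False)))),
            (\<chi> j. Complex (fst (f (j,False))) (snd (f (j,True)))))"

lemma prod_Basis_vec:
  "(\<Prod>b\<in>(Basis :: ('a::euclidean_space^'n) set). g b) = (\<Prod>j\<in>UNIV. \<Prod>c\<in>Basis. g (axis j c))"
proof -
  have "(\<Prod>b\<in>(Basis :: ('a::euclidean_space^'n) set). g b) = (\<Prod>j\<in>UNIV. prod g (\<Union>u\<in>Basis. {axis j u}))"
    unfolding Basis_vec_def
    by (rule prod.UNION_disjoint) (auto simp: axis_eq_axis)
  also have "\<dots> = (\<Prod>j\<in>UNIV. \<Prod>c\<in>Basis. g (axis j c))"
  proof (rule prod.cong[OF refl])
    fix j :: 'n
    have "(\<Union>u\<in>Basis. {axis j u}) = (\<lambda>u. axis j u) ` (Basis :: 'a set)" by auto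
    moreover have "inj_on (\<lambda>u. axis j u) (Basis :: 'a set)" by (auto intro!: inj_onI simp: axis_eq_axis)
    ultimately show "prod g (\<Union>u\<in>Basis. {axis j u}) = (\<Prod>c\<in>Basis. g (axis j c))"
      by (simp add: prod.reindex)
  qed
  finally show ?thesis .
qed

lemma prod_Basis_pair:
  "(\<Prod>b\<in>(Basis :: ('a::euclidean_space \<times> 'b::euclidean_space) set). g b) = (\<Prod>b\<in>Basis. g (b, 0)) * (\<Prod>b\<in>Basis. g (0, b))"
proof -
  have [simp]: "inj_on (\<lambda>u. (u, 0::'b)) Basis" "inj_on (\<lambda>u. (0::'a, u)) Basis"
    "(\<lambda>u. (u, 0::'b)) ` (Basis::'a set) \<inter> (\<lambda>u. (0::'a, u)) ` (Basis :: 'b set) = {}"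
    by (auto intro!: inj_onI)
  show ?thesis
    unfolding Basis_prod_def by (simp add: prod.union_disjoint prod.reindex)
qed

lemma prod_Basis_cc:
  "(\<Prod>b\<in>(Basis :: ((complex^'n) \<times> (complex^'n)) set). g b) =
    (\<Prod>j\<in>UNIV. g (axis j 1, 0) * g (axis j \<i>, 0) * g (0, axis j 1) * g (0, axis j \<i>))"
  unfolding prod_Basis_pair prod_Basis_vec prod.distrib[symmetric]
  by (simp add: Basis_complex_def mult_ac)

lemma mem_box_cc:
  "((z, w) \<in> box (l1, l2) (u1, u2)) \<longleftrightarrow>
    (\<forall>j. Re (l1$j) < Re (z$j) \<and> Re (z$j) < Re (u1$j) \<and> Im (l1$j) < Im (z$j) \<and> Im (z$j) < Im (u1$j) \<and>
         Re (l2$j) < Re (w$j) \<and> Re (w$j) < Re (u2$j) \<and> Im (l2$j) < Im (w$j) \<and> Im (w$j) < Im (u2$j))"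
  (is "?L = ?R")
proof -
  have "?L \<longleftrightarrow> (\<forall>b\<in>Basis. (l1,l2) \<bullet> b < (z,w) \<bullet> b \<and> (z,w) \<bullet> b < (u1,u2) \<bullet> b)"
    by (simp add: mem_box)
  also have "\<dots> \<longleftrightarrow> ?R"
    by (auto simp: Basis_prod_def Basis_vec_def Basis_complex_def inner_axis ball_Un)
  finally show ?thesis .
qed

lemma Psi_measurable: "Psi \<in> measurable (Pi\<^sub>M UNIV (\<lambda>_. (lborel :: (real \<times> real) measure))) borel"
proof -
  have c: "(\<lambda>f. g (f k)) \<in> borel_measurable (Pi\<^sub>M UNIV (\<lambda>_. (lborel :: (real \<times> real) measure)))"
    if "g \<in> borel_measurable borel" for g :: "real \<times> real \<Rightarrow> real" and k :: "'n \<times> bool"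
    using that by measurable
  show ?thesis
    apply (rule borel_measurable_euclidean_space[THEN iffD2])
    by (auto simp: Basis_prod_def Basis_vec_def Basis_complex_def inner_axis Psi_def intro!: c borel_measurable_continuous_onI continuous_on_fst continuous_on_snd continuous_on_id)
qed


lemma bas:
  fixes j :: "'n::finite" and c :: complex
  assumes "c \<in> Basis"
  shows "(axis j c, 0::complex^'n) \<in> (Basis :: ((complex^'n)\<times>(complex^'n)) set)"
    "(0::complex^'n, axis j c) \<in> (Basis :: ((complex^'n)\<times>(complex^'n)) set)"
  using assms unfolding Basis_prod_def by (auto intro!: imageI)

lemma box_pair: "box (a, b) (c, d) = box a c \<times> box (b::'b::euclidean_space) (d::'b)"
  for a c :: "'a::euclidean_space"
  by (auto simp: mem_box Basis_prod_def ball_Un)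

lemma emeasure_box_rr:
  fixes a b c d :: real
  assumes "a \<le> c" "b \<le> d"
  shows "emeasure lborel (box (a, b) (c, d)) = ennreal ((c - a) * (d - b))"
  using assms by (simp add: emeasure_lborel_box_eq Basis_prod_def prod.union_disjoint)

lemma lborel_Psi:
  "(lborel :: ((complex^'n) \<times> (complex^'n)) measure) =
     distr (Pi\<^sub>M UNIV (\<lambda>_::'n\<times>bool. (lborel :: (real \<times> real) measure))) borel Psi"
proof (rule lborel_eqI)
  show "sets (distr (Pi\<^sub>M UNIV (\<lambda>_::'n\<times>bool. (lborel :: (real \<times> real) measure))) borel Psi) = sets borel"
    by simp
  fix l u :: "(complex^'n) \<times> (complex^'n)"
  assume le: "\<And>b. b \<in> Basis \<Longrightarrow> l \<bullet> b \<le> u \<bullet> b"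
  obtain l1 l2 where l: "l = (l1, l2)" by (cases l)
  obtain u1 u2 where u: "u = (u1, u2)" by (cases u)
  have le1: "Re (l1$j) \<le> Re (u1$j)" "Im (l1$j) \<le> Im (u1$j)" "Re (l2$j) \<le> Re (u2$j)" "Im (l2$j) \<le> Im (u2$j)" for j
    using le[OF bas(1)[of 1 j]] le[OF bas(1)[of \<i> j]] le[OF bas(2)[of 1 j]] le[OF bas(2)[of \<i> j]]
    by (simp_all add: l u inner_axis)
  define B where "B = (\<lambda>(j,b). if b then box (Re (l1$j), Im (l2$j)) (Re (u1$j), Im (u2$j))
                                  else box (Re (l2$j), Im (l1$j)) (Re (u2$j), Im (u1$j)))"
  define vol where "vol = (\<lambda>(j,b). if b then (Re (u1$j) - Re (l1$j)) * (Im (u2$j) - Im (l2$j))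
                                  else (Re (u2$j) - Re (l2$j)) * (Im (u1$j) - Im (l1$j)))"
  interpret PS: product_sigma_finite "\<lambda>_::'n\<times>bool. (lborel :: (real \<times> real) measure)"
    by standard
  have pre: "Psi -` box l u \<inter> space (Pi\<^sub>M UNIV (\<lambda>_::'n\<times>bool. (lborel :: (real \<times> real) measure))) = Pi\<^sub>E UNIV B"
  proof -
    have iff: "Psi f \<in> box l u \<longleftrightarrow> (\<forall>k. f k \<in> B k)" for f
      unfolding l u Psi_def mem_box_cc split_paired_All all_bool_eq B_def
      by (simp add: box_pair mem_Times_iff) blast
    then have eq: "Psi -` box l u = {f. \<forall>k. f k \<in> B k}" by blast
    show ?thesis unfolding eq by (auto simp: space_PiM PiE_def extensional_def Pi_def)
  qed
  have "emeasure (distr (Pi\<^sub>M UNIV (\<lambda>_::'n\<times>bool. (lborel :: (real \<times> real) measure))) borel Psi) (box l u)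
      = emeasure (Pi\<^sub>M UNIV (\<lambda>_::'n\<times>bool. (lborel :: (real \<times> real) measure))) (Pi\<^sub>E UNIV B)"
    by (simp add: emeasure_distr[OF Psi_measurable] pre)
  also have "\<dots> = (\<Prod>k\<in>UNIV. emeasure lborel (B k))"
    by (rule PS.emeasure_PiM) (auto simp: B_def)
  also have "\<dots> = (\<Prod>k\<in>UNIV. ennreal (vol k))"
    by (rule prod.cong) (auto simp: B_def vol_def emeasure_box_rr le1)
  also have "\<dots> = ennreal (\<Prod>k\<in>UNIV. vol k)"
    by (rule prod_ennreal) (auto simp: vol_def le1)
  also have "(\<Prod>k\<in>UNIV. vol k) = (\<Prod>b\<in>Basis. (u - l) \<bullet> b)"
  proof -
    have "(\<Prod>k\<in>UNIV. vol k) = (\<Prod>j\<in>UNIV. \<Prod>b\<in>UNIV. vol (j, b))"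
      by (simp add: prod.cartesian_product UNIV_Times_UNIV[symmetric] del: UNIV_Times_UNIV)
    also have "\<dots> = (\<Prod>b\<in>Basis. (u - l) \<bullet> b)"
      unfolding prod_Basis_cc
      by (rule prod.cong) (auto simp: UNIV_bool vol_def l u inner_axis mult_ac)
    finally show ?thesis .
  qed
  finally show "emeasure (distr (Pi\<^sub>M UNIV (\<lambda>_::'n\<times>bool. (lborel :: (real \<times> real) measure))) borel Psi) (box l u)
      = (\<Prod>b\<in>Basis. (u - l) \<bullet> b)" .
qed



lemma pker_prod:
  "pker s lam (z :: complex^'n) w = (\<Prod>j\<in>UNIV. complex_of_real (inverse (4*pi) * (lam / sinh (s*lam)))
      * exp (- complex_of_real (lam/4 * coth (s*lam)) * ((z$j)\<^sup>2 + (w$j)\<^sup>2)))"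
proof -
  have c: "(4*pi) powi (- int CARD('n)) * (lam / sinh (s*lam)) ^ CARD('n) = (inverse (4*pi) * (lam / sinh (s*lam))) ^ CARD('n)"
    by (simp only: power_int_minus power_int_of_nat power_mult_distrib power_inverse)
  have e: "- complex_of_real (lam/4 * coth (s*lam)) * (cdot z z + cdot w w)
     = (\<Sum>j\<in>UNIV. - complex_of_real (lam/4 * coth (s*lam)) * ((z$j)\<^sup>2 + (w$j)\<^sup>2))"
    unfolding cdot_def sum_distrib_left[symmetric] sum.distrib[symmetric] by (simp add: power2_eq_square)
  show ?thesis
    unfolding pker_def e exp_sum[OF finite] prod.distrib prod_constant c of_real_power ..
qed


lemma integrand_prod:
  fixes z w :: "complex^'n" and a b :: "real^'n" and t lam :: real
  defines "P \<equiv> inverse (4*pi) * (lam / sinh ((2*t)*lam))"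
  defines "K \<equiv> lam/4 * coth ((2*t)*lam)"
  shows "pker (2*t) lam (z + cvec a) (w + cvec b)
              * exp (\<i> * complex_of_real (lam/2) * (cdot (cvec a) w - cdot (cvec b) z))
              * cnj (pker (2*t) lam z w)
              * Wker t lam z w
   = (\<Prod>j\<in>UNIV. (complex_of_real P * exp (- complex_of_real K * ((z$j + of_real (a$j))\<^sup>2 + (w$j + of_real (b$j))\<^sup>2)))
        * exp (\<i> * complex_of_real (lam/2) * (of_real (a$j) * w$j - of_real (b$j) * z$j))
        * (complex_of_real P * exp (- complex_of_real K * ((cnj (z$j))\<^sup>2 + (cnj (w$j))\<^sup>2)))
        * (complex_of_real 4 * exp (complex_of_real (lam * (Re (w$j) * Im (z$j) - Im (w$j) * Re (z$j))))
           * (complex_of_real P * exp (- complex_of_real K * ((complex_of_real (2 * Im (z$j)))\<^sup>2 + (complex_of_real (2 * Im (w$j)))\<^sup>2)))))"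
proof -
  have p1: "pker (2*t) lam (z + cvec a) (w + cvec b) = (\<Prod>j\<in>UNIV. complex_of_real P * exp (- complex_of_real K * ((z$j + of_real (a$j))\<^sup>2 + (w$j + of_real (b$j))\<^sup>2)))"
    unfolding pker_prod P_def K_def by (simp add: cvec_def)
  have p2: "exp (\<i> * complex_of_real (lam/2) * (cdot (cvec a) w - cdot (cvec b) z))
      = (\<Prod>j\<in>UNIV. exp (\<i> * complex_of_real (lam/2) * (of_real (a$j) * w$j - of_real (b$j) * z$j)))"
  proof -
    have "\<i> * complex_of_real (lam/2) * (cdot (cvec a) w - cdot (cvec b) z)
       = (\<Sum>j\<in>UNIV. \<i> * complex_of_real (lam/2) * (of_real (a$j) * w$j - of_real (b$j) * z$j))"
      unfolding cdot_def sum_distrib_left[symmetric] sum_subtractf[symmetric] by (simp add: cvec_def)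
    then show ?thesis by (simp add: exp_sum)
  qed
  have p3: "cnj (pker (2*t) lam z w) = (\<Prod>j\<in>UNIV. complex_of_real P * exp (- complex_of_real K * ((cnj (z$j))\<^sup>2 + (cnj (w$j))\<^sup>2)))"
    unfolding pker_prod P_def K_def by (simp add: exp_cnj)
  have p4: "Wker t lam z w = (\<Prod>j\<in>UNIV. complex_of_real 4 * exp (complex_of_real (lam * (Re (w$j) * Im (z$j) - Im (w$j) * Re (z$j))))
           * (complex_of_real P * exp (- complex_of_real K * ((complex_of_real (2 * Im (z$j)))\<^sup>2 + (complex_of_real (2 * Im (w$j)))\<^sup>2))))"
  proof -
    have e: "exp (lam * (re_vec w \<bullet> im_vec z - im_vec w \<bullet> re_vec z)) = (\<Prod>j\<in>UNIV. exp (lam * (Re (w$j) * Im (z$j) - Im (w$j) * Re (z$j))))"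
    proof -
      have "lam * (re_vec w \<bullet> im_vec z - im_vec w \<bullet> re_vec z) = (\<Sum>j\<in>UNIV. lam * (Re (w$j) * Im (z$j) - Im (w$j) * Re (z$j)))"
        unfolding inner_vec_def sum_distrib_left[symmetric] sum_subtractf[symmetric] by (simp add: re_vec_def im_vec_def)
      then show ?thesis by (simp add: exp_sum)
    qed
    have q: "complex_of_real (4 ^ CARD('n) * exp (lam * (re_vec w \<bullet> im_vec z - im_vec w \<bullet> re_vec z)))
       = (\<Prod>j\<in>UNIV. complex_of_real 4 * exp (complex_of_real (lam * (Re (w$j) * Im (z$j) - Im (w$j) * Re (z$j)))))"
      unfolding e prod.distrib prod_constant of_real_mult of_real_prod by (simp add: exp_of_real[symmetric])
    show ?thesis
      unfolding Wker_def Let_def q pker_prod prod.distrib[symmetric] P_def K_def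
      by (simp add: cvec_def im_vec_def)
  qed
  show ?thesis unfolding p1 p2 p3 p4 prod.distrib[symmetric] ..
qed



definition gf :: "real \<Rightarrow> real \<Rightarrow> complex \<Rightarrow> complex \<Rightarrow> real \<times> real \<Rightarrow> complex" where
  "gf A c b1 b2 = (\<lambda>(x, y). exp (b1 * of_real x + b2 * of_real y - of_real A * of_real (x\<^sup>2)
            - of_real c * of_real x * of_real y - of_real A * of_real (y\<^sup>2)))"

lemma coord_identity:
  fixes x y u v a b P K lam :: real
  defines "z \<equiv> Complex x y" and "w \<equiv> Complex u v"
  shows "(complex_of_real P * exp (- complex_of_real K * ((z + of_real a)\<^sup>2 + (w + of_real b)\<^sup>2)))
        * exp (\<i> * complex_of_real (lam/2) * (of_real a * w - of_real b * z))
        * (complex_of_real P * exp (- complex_of_real K * ((cnj z)\<^sup>2 + (cnj w)\<^sup>2)))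
        * (complex_of_real 4 * exp (complex_of_real (lam * (Re w * Im z - Im w * Re z)))
           * (complex_of_real P * exp (- complex_of_real K * ((complex_of_real (2 * Im z))\<^sup>2 + (complex_of_real (2 * Im w))\<^sup>2))))
    = (complex_of_real (4 * P^3) * exp (complex_of_real (- K * a\<^sup>2)) * gf (2*K) lam (Complex (-2*K*a) (-lam*b/2)) (Complex (-lam*a/2) (-2*K*b)) (x, v))
      * (exp (complex_of_real (- K * b\<^sup>2)) * gf (2*K) (-lam) (Complex (-2*K*b) (lam*a/2)) (Complex (lam*b/2) (-2*K*a)) (u, y))"
proof -
  define E1 where "E1 = - complex_of_real K * ((z + of_real a)\<^sup>2 + (w + of_real b)\<^sup>2)"
  define E2 where "E2 = \<i> * complex_of_real (lam/2) * (of_real a * w - of_real b * z)"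
  define E3 where "E3 = - complex_of_real K * ((cnj z)\<^sup>2 + (cnj w)\<^sup>2)"
  define E4 where "E4 = complex_of_real (lam * (Re w * Im z - Im w * Re z))"
  define E5 where "E5 = - complex_of_real K * ((complex_of_real (2 * Im z))\<^sup>2 + (complex_of_real (2 * Im w))\<^sup>2)"
  define F1 where "F1 = complex_of_real (- K * a\<^sup>2)"
  define F2 where "F2 = (Complex (-2*K*a) (-lam*b/2)) * of_real x + (Complex (-lam*a/2) (-2*K*b)) * of_real v - of_real (2*K) * of_real (x\<^sup>2)
            - of_real lam * of_real x * of_real v - of_real (2*K) * of_real (v\<^sup>2)"
  define F3 where "F3 = complex_of_real (- K * b\<^sup>2)"
  define F4 where "F4 = (Complex (-2*K*b) (lam*a/2)) * of_real u + (Complex (lam*b/2) (-2*K*a)) * of_real y - of_real (2*K) * of_real (u\<^sup>2)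
            - of_real (-lam) * of_real u * of_real y - of_real (2*K) * of_real (y\<^sup>2)"
  have E: "E1 + E2 + E3 + E4 + E5 = F1 + F2 + F3 + F4"
  proof (rule complex_eqI)
    show "Re (E1 + E2 + E3 + E4 + E5) = Re (F1 + F2 + F3 + F4)"
      unfolding E1_def E2_def E3_def E4_def E5_def F1_def F2_def F3_def F4_def z_def w_def
      by (simp add: power2_eq_square algebra_simps)
    show "Im (E1 + E2 + E3 + E4 + E5) = Im (F1 + F2 + F3 + F4)"
      unfolding E1_def E2_def E3_def E4_def E5_def F1_def F2_def F3_def F4_def z_def w_def
      by (simp add: power2_eq_square algebra_simps)
  qed
  have L: "(complex_of_real P * exp E1) * exp E2 * (complex_of_real P * exp E3) * (complex_of_real 4 * exp E4 * (complex_of_real P * exp E5))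
     = complex_of_real (4 * P^3) * exp (E1 + E2 + E3 + E4 + E5)"
    unfolding exp_add by (simp add: power3_eq_cube mult_ac)
  have R: "(complex_of_real (4 * P^3) * exp F1 * exp F2) * (exp F3 * exp F4) = complex_of_real (4 * P^3) * exp (F1 + F2 + F3 + F4)"
    unfolding exp_add by (simp add: mult_ac)
  have "(complex_of_real P * exp (- complex_of_real K * ((z + of_real a)\<^sup>2 + (w + of_real b)\<^sup>2)))
        * exp (\<i> * complex_of_real (lam/2) * (of_real a * w - of_real b * z))
        * (complex_of_real P * exp (- complex_of_real K * ((cnj z)\<^sup>2 + (cnj w)\<^sup>2)))
        * (complex_of_real 4 * exp (complex_of_real (lam * (Re w * Im z - Im w * Re z)))
           * (complex_of_real P * exp (- complex_of_real K * ((complex_of_real (2 * Im z))\<^sup>2 + (complex_of_real (2 * Im w))\<^sup>2))))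
     = (complex_of_real P * exp E1) * exp E2 * (complex_of_real P * exp E3) * (complex_of_real 4 * exp E4 * (complex_of_real P * exp E5))"
    unfolding E1_def E2_def E3_def E4_def E5_def by (rule refl)
  also have "\<dots> = complex_of_real (4 * P^3) * exp (F1 + F2 + F3 + F4)" unfolding L E ..
  also have "\<dots> = (complex_of_real (4 * P^3) * exp F1 * exp F2) * (exp F3 * exp F4)" using R by (simp only: mult_ac)
  also have "\<dots> = (complex_of_real (4 * P^3) * exp (complex_of_real (- K * a\<^sup>2)) * gf (2*K) lam (Complex (-2*K*a) (-lam*b/2)) (Complex (-lam*a/2) (-2*K*b)) (x, v))
      * (exp (complex_of_real (- K * b\<^sup>2)) * gf (2*K) (-lam) (Complex (-2*K*b) (lam*a/2)) (Complex (lam*b/2) (-2*K*a)) (u, y))"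
    unfolding gf_def F1_def F2_def F3_def F4_def by simp
  finally show ?thesis .
qed



lemma params:
  fixes t lam :: real
  assumes t: "t > 0" and lam: "lam \<noteq> 0"
  defines "P \<equiv> inverse (4*pi) * (lam / sinh ((2*t)*lam))"
  defines "K \<equiv> lam/4 * coth ((2*t)*lam)"
  shows "K > 0" "lam\<^sup>2 < 4 * (2*K)\<^sup>2" "4 * P\<^sup>2 * pi\<^sup>2 = (2*K)\<^sup>2 - lam\<^sup>2/4"
proof -
  define S where "S = sinh ((2*t)*lam)"
  define C where "C = cosh ((2*t)*lam)"
  have lS: "lam * S > 0"
  proof (cases "lam > 0")
    case True then show ?thesis using t by (simp add: S_def)
  next
    case False then have "lam < 0" using lam by simp
    then show ?thesis using t by (simp add: S_def mult_neg_neg mult_pos_neg)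
  qed
  have S0: "S \<noteq> 0" using lS by auto
  have C0: "C > 0" unfolding C_def by simp
  have CS: "C\<^sup>2 = S\<^sup>2 + 1" unfolding C_def S_def by (rule cosh_square_eq)
  have Kd: "K = lam * S * C / (4 * S\<^sup>2)" unfolding K_def coth_def S_def[symmetric] C_def[symmetric]
    using S0 by (simp add: field_simps power2_eq_square)
  show "K > 0" unfolding Kd using lS C0 S0 by simp
  have "(2*K)\<^sup>2 = lam\<^sup>2 * C\<^sup>2 / (4 * S\<^sup>2)" unfolding Kd using S0 by (simp add: field_simps power2_eq_square)
  also have "\<dots> = lam\<^sup>2 / 4 + lam\<^sup>2 / (4 * S\<^sup>2)" unfolding CS using S0 by (simp add: field_simps)
  finally have K2: "(2*K)\<^sup>2 = lam\<^sup>2 / 4 + lam\<^sup>2 / (4 * S\<^sup>2)" .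
  have "lam\<^sup>2 / (4 * S\<^sup>2) > 0" using lam S0 by simp
  then show "lam\<^sup>2 < 4 * (2*K)\<^sup>2" unfolding K2 by simp
  show "4 * P\<^sup>2 * pi\<^sup>2 = (2*K)\<^sup>2 - lam\<^sup>2/4"
    unfolding K2 P_def S_def[symmetric] using S0 by (simp add: field_simps power2_eq_square)
qed


lemma coord_val:
  fixes K P lam a b :: real
  assumes D: "4 * P\<^sup>2 * pi\<^sup>2 = (2*K)\<^sup>2 - lam\<^sup>2/4" and Dpos: "lam\<^sup>2 < 4 * (2*K)\<^sup>2"
  shows "complex_of_real (4 * P^3) * exp (complex_of_real (- K * a\<^sup>2)) *
     (of_real (pi / sqrt ((2*K)\<^sup>2 - lam\<^sup>2/4)) * exp ((of_real (2*K) * ((Complex (-2*K*a) (-lam*b/2))\<^sup>2 + (Complex (-lam*a/2) (-2*K*b))\<^sup>2)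
          - of_real lam * Complex (-2*K*a) (-lam*b/2) * Complex (-lam*a/2) (-2*K*b)) / of_real (4*(2*K)\<^sup>2 - lam\<^sup>2)))
   * (exp (complex_of_real (- K * b\<^sup>2)) *
     (of_real (pi / sqrt ((2*K)\<^sup>2 - (-lam)\<^sup>2/4)) * exp ((of_real (2*K) * ((Complex (-2*K*b) (lam*a/2))\<^sup>2 + (Complex (lam*b/2) (-2*K*a))\<^sup>2)
          - of_real (-lam) * Complex (-2*K*b) (lam*a/2) * Complex (lam*b/2) (-2*K*a)) / of_real (4*(2*K)\<^sup>2 - (-lam)\<^sup>2))))
   = complex_of_real P * exp (- complex_of_real K * ((complex_of_real a)\<^sup>2 + (complex_of_real b)\<^sup>2))"
proof -
  define N1 where "N1 = of_real (2*K) * ((Complex (-2*K*a) (-lam*b/2))\<^sup>2 + (Complex (-lam*a/2) (-2*K*b))\<^sup>2)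
          - of_real lam * Complex (-2*K*a) (-lam*b/2) * Complex (-lam*a/2) (-2*K*b)"
  define N2 where "N2 = of_real (2*K) * ((Complex (-2*K*b) (lam*a/2))\<^sup>2 + (Complex (lam*b/2) (-2*K*a))\<^sup>2)
          - of_real (-lam) * Complex (-2*K*b) (lam*a/2) * Complex (lam*b/2) (-2*K*a)"
  define Q where "Q = complex_of_real (4*(2*K)\<^sup>2 - lam\<^sup>2)"
  define D' where "D' = (2*K)\<^sup>2 - lam\<^sup>2/4"
  have Dp: "D' > 0" using Dpos unfolding D'_def by simp
  have N: "N1 + N2 = 0"
    unfolding N1_def N2_def by (rule complex_eqI) (simp_all add: power2_eq_square algebra_simps)
  have ex: "complex_of_real (- K * a\<^sup>2) + N1 / Q + (complex_of_real (- K * b\<^sup>2) + N2 / Q)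
      = - complex_of_real K * ((complex_of_real a)\<^sup>2 + (complex_of_real b)\<^sup>2)"
  proof -
    have "N1 / Q + N2 / Q = 0" using N by (simp add: add_divide_distrib[symmetric])
    then show ?thesis by (simp add: algebra_simps)
  qed
  have re: "4 * P^3 * ((pi / sqrt D') * (pi / sqrt D')) = P"
  proof -
    have "(pi / sqrt D') * (pi / sqrt D') = pi\<^sup>2 / D'" using Dp by (simp add: power2_eq_square)
    moreover have "pi\<^sup>2 / D' = pi\<^sup>2 / (4 * P\<^sup>2 * pi\<^sup>2)" unfolding D'_def D ..
    ultimately show ?thesis
      using Dp D unfolding D'_def[symmetric]
      by (cases "P = 0") (auto simp: field_simps power2_eq_square power3_eq_cube)
  qed
  have m: "(-lam)\<^sup>2 = lam\<^sup>2" by simp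
  have "complex_of_real (4 * P^3) * exp (complex_of_real (- K * a\<^sup>2)) * (of_real (pi / sqrt D') * exp (N1 / Q))
     * (exp (complex_of_real (- K * b\<^sup>2)) * (of_real (pi / sqrt D') * exp (N2 / Q)))
     = complex_of_real (4 * P^3 * ((pi / sqrt D') * (pi / sqrt D'))) * exp (complex_of_real (- K * a\<^sup>2) + N1 / Q + (complex_of_real (- K * b\<^sup>2) + N2 / Q))"
    unfolding exp_add of_real_mult by (simp only: mult_ac)
  also have "\<dots> = complex_of_real P * exp (- complex_of_real K * ((complex_of_real a)\<^sup>2 + (complex_of_real b)\<^sup>2))"
    unfolding re ex ..
  finally show ?thesis unfolding N1_def[symmetric] N2_def[symmetric] Q_def[symmetric] D'_def[symmetric] m
    by (simp only: N1_def N2_def Q_def m)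
qed



lemma integrand_cont:
  fixes t lam :: real and a b :: "real^'n"
  shows "continuous_on UNIV (\<lambda>(z :: complex^'n, w :: complex^'n).
              pker (2*t) lam (z + cvec a) (w + cvec b)
              * exp (\<i> * complex_of_real (lam/2) * (cdot (cvec a) w - cdot (cvec b) z))
              * cnj (pker (2*t) lam z w)
              * Wker t lam z w)"
  unfolding pker_def Wker_def Let_def cdot_def re_vec_def im_vec_def cvec_def inner_vec_def split_beta
  by (intro continuous_intros)


lemma prod_pair_bool:
  fixes g :: "'n::finite \<times> bool \<Rightarrow> 'c::comm_monoid_mult"
  shows "(\<Prod>k\<in>UNIV. g k) = (\<Prod>j\<in>UNIV. g (j,True) * g (j,False))"
proof -
  have "(\<Prod>j\<in>UNIV. g (j,True) * g (j,False)) = (\<Prod>j\<in>UNIV. \<Prod>bb\<in>UNIV. g (j,bb))"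
    by (simp add: UNIV_bool mult.commute)
  also have "\<dots> = (\<Prod>k\<in>UNIV \<times> UNIV. g k)"
    unfolding prod.cartesian_product by simp
  finally show ?thesis by simp
qed

theorem lemma4p2:
  fixes t lam :: real and a b :: "real^'n"
  assumes "t > 0" and "lam \<noteq> 0"
  shows "integral\<^sup>L lborel
           (\<lambda>(z :: complex^'n, w :: complex^'n).
              pker (2*t) lam (z + cvec a) (w + cvec b)
              * exp (\<i> * complex_of_real (lam/2) * (cdot (cvec a) w - cdot (cvec b) z))
              * cnj (pker (2*t) lam z w)
              * Wker t lam z w)
         = pker (2*t) lam (cvec a) (cvec b)"
proof -
  define P where "P = inverse (4*pi) * (lam / sinh ((2*t)*lam))"
  define K where "K = lam/4 * coth ((2*t)*lam)"
  have Kp: "K > 0" and Dpos: "lam\<^sup>2 < 4 * (2*K)\<^sup>2" and D: "4 * P\<^sup>2 * pi\<^sup>2 = (2*K)\<^sup>2 - lam\<^sup>2/4"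
    using params[OF assms] unfolding P_def K_def by auto
  have Dpos': "(-lam)\<^sup>2 < 4 * (2*K)\<^sup>2" using Dpos by simp
  define Hf where "Hf = (\<lambda>(z :: complex^'n, w :: complex^'n).
              pker (2*t) lam (z + cvec a) (w + cvec b)
              * exp (\<i> * complex_of_real (lam/2) * (cdot (cvec a) w - cdot (cvec b) z))
              * cnj (pker (2*t) lam z w)
              * Wker t lam z w)"
  define eT where "eT = (\<lambda>j. \<lambda>p. complex_of_real (4 * P^3) * exp (complex_of_real (- K * (a$j)\<^sup>2))
      * gf (2*K) lam (Complex (-2*K*(a$j)) (-lam*(b$j)/2)) (Complex (-lam*(a$j)/2) (-2*K*(b$j))) p)"
  define eF where "eF = (\<lambda>j. \<lambda>p. exp (complex_of_real (- K * (b$j)\<^sup>2))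
      * gf (2*K) (-lam) (Complex (-2*K*(b$j)) (lam*(a$j)/2)) (Complex (lam*(b$j)/2) (-2*K*(a$j))) p)"
  define e where "e = (\<lambda>(j::'n, bb::bool). if bb then eT j else eF j)"
  have gfI: "has_bochner_integral lborel (gf (2*K) c b1 b2)
      (of_real (pi / sqrt ((2*K)\<^sup>2 - c\<^sup>2/4)) * exp ((of_real (2*K) * (b1\<^sup>2 + b2\<^sup>2) - of_real c * b1 * b2) / of_real (4*(2*K)\<^sup>2 - c\<^sup>2)))"
    if "c\<^sup>2 < 4*(2*K)\<^sup>2" for c b1 b2
  proof -
    have "0 < 2*K" using Kp by simp
    from gauss2[OF this that, of b1 b2] show ?thesis by (simp only: lborel_prod gf_def)
  qed
  have intT: "has_bochner_integral lborel (eT j) (complex_of_real (4 * P^3) * exp (complex_of_real (- K * (a$j)\<^sup>2)) *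
     (of_real (pi / sqrt ((2*K)\<^sup>2 - lam\<^sup>2/4)) * exp ((of_real (2*K) * ((Complex (-2*K*(a$j)) (-lam*(b$j)/2))\<^sup>2 + (Complex (-lam*(a$j)/2) (-2*K*(b$j)))\<^sup>2)
          - of_real lam * Complex (-2*K*(a$j)) (-lam*(b$j)/2) * Complex (-lam*(a$j)/2) (-2*K*(b$j))) / of_real (4*(2*K)\<^sup>2 - lam\<^sup>2))))" for j
    unfolding eT_def by (rule has_bochner_integral_mult_right[OF gfI[OF Dpos]])
  have intF: "has_bochner_integral lborel (eF j) (exp (complex_of_real (- K * (b$j)\<^sup>2)) *
     (of_real (pi / sqrt ((2*K)\<^sup>2 - (-lam)\<^sup>2/4)) * exp ((of_real (2*K) * ((Complex (-2*K*(b$j)) (lam*(a$j)/2))\<^sup>2 + (Complex (lam*(b$j)/2) (-2*K*(a$j)))\<^sup>2)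
          - of_real (-lam) * Complex (-2*K*(b$j)) (lam*(a$j)/2) * Complex (lam*(b$j)/2) (-2*K*(a$j))) / of_real (4*(2*K)\<^sup>2 - (-lam)\<^sup>2))))" for j
    unfolding eF_def by (rule has_bochner_integral_mult_right[OF gfI[OF Dpos']])
  have inte: "integrable lborel (e k)" for k
    using intT intF unfolding e_def by (cases k) (auto simp: has_bochner_integral_iff)
  have vals: "integral\<^sup>L lborel (eT j) * integral\<^sup>L lborel (eF j)
      = complex_of_real P * exp (- complex_of_real K * ((complex_of_real (a$j))\<^sup>2 + (complex_of_real (b$j))\<^sup>2))" for j
    using intT[of j] intF[of j] coord_val[OF D Dpos, of "a$j" "b$j"]
    by (simp add: has_bochner_integral_iff)
  have Hpsi: "Hf (Psi f) = (\<Prod>k\<in>UNIV. e k (f k))" for f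
  proof -
    have "Hf (Psi f) = (\<Prod>j\<in>UNIV. eT j (f (j, True)) * eF j (f (j, False)))"
      unfolding Hf_def Psi_def split_beta fst_conv snd_conv integrand_prod P_def[symmetric] K_def[symmetric]
    proof (rule prod.cong[OF refl])
      fix j
      show "complex_of_real P * exp (- complex_of_real K * (((\<chi> j. Complex (fst (f (j, True))) (snd (f (j, False)))) $ j + complex_of_real (a $ j))\<^sup>2 +
                ((\<chi> j. Complex (fst (f (j, False))) (snd (f (j, True)))) $ j + complex_of_real (b $ j))\<^sup>2)) *
          exp (\<i> * complex_of_real (lam / 2) *
               (complex_of_real (a $ j) * (\<chi> j. Complex (fst (f (j, False))) (snd (f (j, True)))) $ j -
                complex_of_real (b $ j) * (\<chi> j. Complex (fst (f (j, True))) (snd (f (j, False)))) $ j)) *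
          (complex_of_real P * exp (- complex_of_real K * ((cnj ((\<chi> j. Complex (fst (f (j, True))) (snd (f (j, False)))) $ j))\<^sup>2 +
                  (cnj ((\<chi> j. Complex (fst (f (j, False))) (snd (f (j, True)))) $ j))\<^sup>2))) *
          (complex_of_real 4 * exp (complex_of_real (lam * (Re ((\<chi> j. Complex (fst (f (j, False))) (snd (f (j, True)))) $ j) *
                       Im ((\<chi> j. Complex (fst (f (j, True))) (snd (f (j, False)))) $ j) -
                       Im ((\<chi> j. Complex (fst (f (j, False))) (snd (f (j, True)))) $ j) *
                       Re ((\<chi> j. Complex (fst (f (j, True))) (snd (f (j, False)))) $ j)))) *
           (complex_of_real P * exp (- complex_of_real K * ((complex_of_real (2 * Im ((\<chi> j. Complex (fst (f (j, True))) (snd (f (j, False)))) $ j)))\<^sup>2 +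
                   (complex_of_real (2 * Im ((\<chi> j. Complex (fst (f (j, False))) (snd (f (j, True)))) $ j)))\<^sup>2)))) =
          eT j (f (j, True)) * eF j (f (j, False))"
        unfolding vec_lambda_beta eT_def eF_def
        using coord_identity[where x="fst (f (j,True))" and y="snd (f (j,False))" and u="fst (f (j,False))" and v="snd (f (j,True))"
            and P=P and K=K and a="a$j" and b="b$j" and lam=lam]
        by (simp only: prod.collapse complex.sel)
    qed
    also have "\<dots> = (\<Prod>k\<in>UNIV. e k (f k))"
      unfolding prod_pair_bool[of "\<lambda>k. e k (f k)"] by (simp add: e_def)
    finally show ?thesis .
  qed
  have meas: "Hf \<in> borel_measurable borel"
    unfolding Hf_def by (rule borel_measurable_continuous_onI[OF integrand_cont])
  interpret PS: product_sigma_finite "\<lambda>_::'n\<times>bool. (lborel :: (real \<times> real) measure)"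
    by standard
  have "integral\<^sup>L lborel Hf = integral\<^sup>L (distr (Pi\<^sub>M UNIV (\<lambda>_::'n\<times>bool. (lborel :: (real \<times> real) measure))) borel Psi) Hf"
    by (subst lborel_Psi) (rule refl)
  also have "\<dots> = (\<integral>f. Hf (Psi f) \<partial>(Pi\<^sub>M UNIV (\<lambda>_::'n\<times>bool. (lborel :: (real \<times> real) measure))))"
    by (rule integral_distr[OF Psi_measurable meas])
  also have "\<dots> = (\<integral>f. (\<Prod>k\<in>UNIV. e k (f k)) \<partial>(Pi\<^sub>M UNIV (\<lambda>_::'n\<times>bool. (lborel :: (real \<times> real) measure))))"
    unfolding Hpsi ..
  also have "\<dots> = (\<Prod>k\<in>UNIV. integral\<^sup>L lborel (e k))"
    by (rule PS.product_integral_prod) (auto intro: inte)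
  also have "\<dots> = (\<Prod>j\<in>UNIV. integral\<^sup>L lborel (eT j) * integral\<^sup>L lborel (eF j))"
    unfolding prod_pair_bool[of "\<lambda>k. integral\<^sup>L lborel (e k)"] by (simp add: e_def)
  also have "\<dots> = pker (2*t) lam (cvec a) (cvec b)"
    unfolding vals pker_prod P_def K_def by (simp add: cvec_def)
  finally show ?thesis unfolding Hf_def .
qed

end
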